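(* Fix $\gamma\in(2/3,1)$. For $N>0$ let $w_N=(N,N)$, $M=N-\sqrt2N^\gamma$, $K=[2\sqrt2N^{1+\gamma}]+1$, $z_j=(jM/K,\,jM/K+\sqrt2N^\gamma)$ for $0\le j\le K$, $\mathcal{C}=\{z_j\}_{j=0}^K$, and let $\mathcal{C}'$ be the image of $\mathcal{C}$ under $T_N(x,y)=(N-x,N-y)$. Then for all sufficiently large $N$ and every $z\in\mathcal{C}\cup\mathcal{C}'$, $$\sqrt{a(0,z)}+\sqrt{a(z,w_N)}-\sqrt{a(0,w_N)}\le -N^{2\gamma-1}.$$
   Context: $a(w,w')$ denotes the area of the axis-parallel rectangle with corners $w$ and $w'$. $[x]$ is the integer part. *)

theory Defs
  imports Complex_Main
begin

definition rect_area :: "real \<times> real \<Rightarrow> real \<times> real \<Rightarrow> real" where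
  "rect_area w w' = \<bar>fst w - fst w'\<bar> * \<bar>snd w - snd w'\<bar>"

definition M_of :: "real \<Rightarrow> real \<Rightarrow> real" where
  "M_of \<gamma> N = N - sqrt 2 * N powr \<gamma>"

definition K_of :: "real \<Rightarrow> real \<Rightarrow> nat" where
  "K_of \<gamma> N = nat \<lfloor>2 * sqrt 2 * N powr (1 + \<gamma>)\<rfloor> + 1"

definition zpt :: "real \<Rightarrow> real \<Rightarrow> nat \<Rightarrow> real \<times> real" where
  "zpt \<gamma> N j = (real j * M_of \<gamma> N / real (K_of \<gamma> N),
                 real j * M_of \<gamma> N / real (K_of \<gamma> N) + sqrt 2 * N powr \<gamma>)"

definition Cset :: "real \<Rightarrow> real \<Rightarrow> (real \<times> real) set" where
  "Cset \<gamma> N = zpt \<gamma> N ` {0..K_of \<gamma> N}"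

definition TN :: "real \<Rightarrow> real \<times> real \<Rightarrow> real \<times> real" where
  "TN N p = (N - fst p, N - snd p)"

definition Cset' :: "real \<Rightarrow> real \<Rightarrow> (real \<times> real) set" where
  "Cset' \<gamma> N = TN N ` Cset \<gamma> N"

end

theory Submission
  imports Defs
begin

lemma sq_le: "0 \<le> y \<Longrightarrow> x \<le> y^2 \<Longrightarrow> sqrt x \<le> y"
  using real_sqrt_le_mono[of x "y^2"] by simp
lemma half_bound:
  fixes u d :: real
  assumes "d/2 \<le> u" "0 < d"
  shows "sqrt (u^2 - d^2/4) \<le> u - d^2/(8*u)"
proof (rule sq_le)
  have up: "u > 0" using assms by auto
  have "(d/2)^2 \<le> u^2" using assms by (intro power_mono) auto
  hence "d^2 \<le> 4*u^2" by (simp add: power_divide)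
  hence "d^2 \<le> 8*u^2" using zero_le_power2[of u] by linarith
  hence "d^2/(8*u) \<le> u" using up by (simp add: divide_le_eq power2_eq_square algebra_simps)
  thus "0 \<le> u - d^2/(8*u)" by simp
  have "(u - d^2/(8*u))^2 = u^2 - d^2/4 + (d^2/(8*u))^2" using up
    by (simp add: power2_diff power_divide field_simps) (simp add: power2_eq_square)
  thus "u^2 - d^2/4 \<le> (u - d^2/(8*u))^2" by simp
qed
lemma core:
  fixes t d N :: real
  assumes "0 \<le> t" "0 < d" "t + d \<le> N"
  shows "sqrt (t*(t+d)) + sqrt ((N-t)*(N-t-d)) - N \<le> - (d^2/(2*N))"
proof -
  define u where "u = t + d/2"
  define v where "v = N - t - d/2"
  have u: "u \<ge> d/2" and v: "v \<ge> d/2" using assms by (auto simp: u_def v_def)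
  have up: "u > 0" "v > 0" using u v assms by auto
  have e1: "t*(t+d) = u^2 - d^2/4" unfolding u_def by (simp add: power2_eq_square field_simps)
  have e2: "(N-t)*(N-t-d) = v^2 - d^2/4" unfolding v_def by (simp add: power2_eq_square field_simps)
  have uv: "u + v = N" unfolding u_def v_def by simp
  have h: "sqrt (t*(t+d)) + sqrt ((N-t)*(N-t-d)) \<le> N - (d^2/(8*u) + d^2/(8*v))"
    using half_bound[OF u assms(2)] half_bound[OF v assms(2)] e1 e2 uv by simp
  have "4 / N \<le> 1/u + 1/v"
  proof -
    have "(u - v)^2 \<ge> 0" by simp
    hence "4*u*v \<le> (u+v)*(u+v)" by (simp add: power2_eq_square algebra_simps)
    thus ?thesis using up uv by (simp add: field_simps)
  qed
  hence "d^2/8 * (4/N) \<le> d^2/8 * (1/u + 1/v)" by (intro mult_left_mono) auto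
  hence "d^2/(2*N) \<le> d^2/(8*u) + d^2/(8*v)" by (simp add: field_simps)
  thus ?thesis using h by simp
qed

lemma ev_bound:
  fixes \<gamma> :: real
  assumes "\<gamma> < 1"
  shows "\<forall>\<^sub>F N in at_top. 0 < N \<and> sqrt 2 * N powr \<gamma> \<le> N"
proof -
  define c where "c = max 1 (2 powr (1/(1-\<gamma>)))"
  have "\<forall>\<^sub>F N in at_top. c \<le> (N::real)" by (rule eventually_ge_at_top)
  thus ?thesis
  proof eventually_elim
    case (elim N)
    have N1: "N \<ge> 1" and N2: "N \<ge> 2 powr (1/(1-\<gamma>))" using elim unfolding c_def by auto
    have g: "0 \<le> 1 - \<gamma>" using assms by simp
    have "(2 powr (1/(1-\<gamma>))) powr (1-\<gamma>) \<le> N powr (1-\<gamma>)"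
      using powr_mono2[OF g _ N2] by simp
    moreover have "(2 powr (1/(1-\<gamma>))) powr (1-\<gamma>) = 2"
      unfolding powr_powr using assms by simp
    ultimately have a: "2 \<le> N powr (1-\<gamma>)" by simp
    have b: "N powr \<gamma> * N powr (1-\<gamma>) = N"
      using powr_add[of N \<gamma> "1-\<gamma>", symmetric] N1 by simp
    have "sqrt 2 \<le> 2" by (rule sq_le) auto
    hence "sqrt 2 * N powr \<gamma> \<le> 2 * N powr \<gamma>" by (intro mult_right_mono) auto
    also have "\<dots> \<le> N powr (1-\<gamma>) * N powr \<gamma>" using a by (intro mult_right_mono) auto
    also have "\<dots> = N" using b by (simp add: mult.commute)
    finally show ?case using N1 by simp
  qed
qed

theorem lemma3p2:
  fixes \<gamma> :: real
  assumes "2/3 < \<gamma>" and "\<gamma> < 1"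
  shows "\<forall>\<^sub>F N in at_top. \<forall>z \<in> Cset \<gamma> N \<union> Cset' \<gamma> N.
           sqrt (rect_area (0,0) z) + sqrt (rect_area z (N,N)) - sqrt (rect_area (0,0) (N,N))
             \<le> - (N powr (2*\<gamma> - 1))"
  using ev_bound[OF assms(2)]
proof eventually_elim
  case (elim N)
  hence Np: "0 < N" and Mnn: "0 \<le> M_of \<gamma> N" by (auto simp: M_of_def)
  define d where "d = sqrt 2 * N powr \<gamma>"
  have dp: "0 < d" using Np by (simp add: d_def)
  have dd: "d^2/(2*N) = N powr (2*\<gamma> - 1)"
  proof -
    have "(N powr \<gamma>)^2 = N powr (2*\<gamma>)" using Np powr_power[of N \<gamma> 2] by simp
    hence "d^2 = 2 * N powr (2*\<gamma>)" unfolding d_def power_mult_distrib by simp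
    moreover have "N powr (2*\<gamma> - 1) = N powr (2*\<gamma>) / N" using Np powr_diff[of N "2*\<gamma>" 1] by simp
    ultimately show ?thesis by simp
  qed
  have sN: "sqrt (rect_area (0,0) (N,N)) = N" using Np by (simp add: rect_area_def)
  have key: "sqrt (t*(t+d)) + sqrt ((N-t)*(N-t-d)) - N \<le> - (N powr (2*\<gamma> - 1))"
    if j: "j \<le> K_of \<gamma> N" and t: "t = real j * M_of \<gamma> N / real (K_of \<gamma> N)" for j t
  proof -
    have Kp0: "K_of \<gamma> N > 0" by (simp add: K_of_def)
    hence Kp: "real (K_of \<gamma> N) > 0" by simp
    have t0: "0 \<le> t" using t Mnn Kp by simp
    have "t \<le> 1 * M_of \<gamma> N" unfolding t using j Kp Mnn
      using mult_right_mono[of "real j" "real (K_of \<gamma> N)" "M_of \<gamma> N"]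
      by (simp add: divide_le_eq mult.commute)
    hence "t + d \<le> N" by (simp add: M_of_def d_def)
    from core[OF t0 dp this] dd show ?thesis by simp
  qed
  show ?case
  proof
    fix z assume "z \<in> Cset \<gamma> N \<union> Cset' \<gamma> N"
    then obtain j where j: "j \<le> K_of \<gamma> N" and
      z: "z = zpt \<gamma> N j \<or> z = TN N (zpt \<gamma> N j)"
      unfolding Cset_def Cset'_def by auto
    define t where "t = real j * M_of \<gamma> N / real (K_of \<gamma> N)"
    have k: "sqrt (t*(t+d)) + sqrt ((N-t)*(N-t-d)) - N \<le> - (N powr (2*\<gamma> - 1))"
      using key[OF j t_def] .
    have Kp0: "K_of \<gamma> N > 0" by (simp add: K_of_def)
    hence Kp: "real (K_of \<gamma> N) > 0" by simp
    have t0: "0 \<le> t" using t_def Mnn Kp by simp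
    have "t \<le> 1 * M_of \<gamma> N" unfolding t_def using j Kp Mnn
      using mult_right_mono[of "real j" "real (K_of \<gamma> N)" "M_of \<gamma> N"]
      by (simp add: divide_le_eq mult.commute)
    hence tN: "t + d \<le> N" by (simp add: M_of_def d_def)
    have a1: "rect_area (0,0) (t, t+d) = t*(t+d)" using t0 dp by (simp add: rect_area_def)
    have a2: "rect_area (t, t+d) (N,N) = (N-t)*(N-t-d)" using tN t0 dp
      by (simp add: rect_area_def abs_of_nonpos)
    have a3: "rect_area (0,0) (N-t, N-(t+d)) = (N-t)*(N-t-d)" using tN t0 dp
      by (simp add: rect_area_def)
    have a4: "rect_area (N-t, N-(t+d)) (N,N) = t*(t+d)" using tN t0 dp
      by (simp add: rect_area_def)
    have zz: "zpt \<gamma> N j = (t, t+d)" by (simp add: zpt_def t_def d_def)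
    from z show "sqrt (rect_area (0,0) z) + sqrt (rect_area z (N,N)) - sqrt (rect_area (0,0) (N,N))
             \<le> - (N powr (2*\<gamma> - 1))"
    proof
      assume "z = zpt \<gamma> N j" thus ?thesis using k a1 a2 sN zz by simp
    next
      assume "z = TN N (zpt \<gamma> N j)" thus ?thesis using k a3 a4 sN zz by (simp add: TN_def)
    qed
  qed
qed

end
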